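(* Let $p_{l_n}$ be a probability density function on $[0,\infty)$ (the normalized square-radius density), and let $F_{l_n}(\tau)=\int_0^{\tau}p_{l_n}(x)\,dx$ denote its cumulative distribution function. For a positive integer $N$ and $\beta>0$ define $$P_e(N,\beta)=\int_0^\infty\left[1-\frac{1}{\Gamma(N/2)}\,\gamma\!\left(\frac{N}{2},\frac{N\beta x}{2}\right)\right]p_{l_n}(x)\,dx .$$ Let $\tau=1/\beta$ and $P_e^a(\tau)=\lim_{N\to\infty}P_e(N,\beta)$. Then $$P_e^a(\tau)=\lim_{N\to\infty}P_e(N,\beta)=\int_0^{1/\beta}p_{l_n}(x)\,dx=\int_0^{\tau}p_{l_n}(x)\,dx=F_{l_n}(\tau).$$
   Context: $\Gamma$ is the gamma function and $\gamma(\alpha,x)=\int_0^x e^{-t}t^{\alpha-1}\,dt$ (for $\alpha>0$) is the lower incomplete gamma function. The quantity $P_e(N,\beta)$ is the word error rate of a length-$N$ binary linear block code with BPSK in AWGN at SNR $\beta=2E_s/N_0$, where $p_{l_n}$ is the density of the square radius of the decision region (in the direction of the noise) normalized by $NE_s$; the density $p_{l_n}$ is held fixed as $N\to\infty$. *)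

theory Defs
  imports "HOL-Analysis.Analysis"
begin

definition lower_inc_gamma :: "real \<Rightarrow> real \<Rightarrow> real" where
  "lower_inc_gamma a x = (LINT t:{0..x}|lborel. exp (- t) * t powr (a - 1))"

definition sqr_cdf :: "(real \<Rightarrow> real) \<Rightarrow> real \<Rightarrow> real" where
  "sqr_cdf p \<tau> = (LINT x:{0..\<tau>}|lborel. p x)"

definition word_error_rate :: "(real \<Rightarrow> real) \<Rightarrow> nat \<Rightarrow> real \<Rightarrow> real" where
  "word_error_rate p N \<beta> =
     (LINT x:{0..}|lborel.
        (1 - lower_inc_gamma (real N / 2) (real N * \<beta> * x / 2) / Gamma (real N / 2)) * p x)"

end

theory Submission imports Defs begin

definition gg :: "real \<Rightarrow> real \<Rightarrow> real" where
  "gg a t = indicator {0..} t * t powr (a - 1) / exp t"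

lemma gg_meas[measurable]: "gg a \<in> borel_measurable lborel"
  unfolding gg_def by measurable

lemma gg_nonneg: "gg a t \<ge> 0"
  unfolding gg_def by (auto simp: indicator_def)

lemma gg_int: assumes "a > 0" shows "integrable lborel (gg a)" "integral\<^sup>L lborel (gg a) = Gamma a"
proof -
  have "(\<integral>\<^sup>+t. gg a t \<partial>lborel) = ennreal (Gamma a)"
    using Gamma_conv_nn_integral_real[OF assms] by (simp add: gg_def)
  then have "integrable lborel (gg a) \<and> integral\<^sup>L lborel (gg a) = Gamma a"
    by (subst (asm) nn_integral_eq_integrable) (auto simp: gg_nonneg less_imp_le[OF Gamma_real_pos[OF assms]])
  then show "integrable lborel (gg a)" "integral\<^sup>L lborel (gg a) = Gamma a" by auto
qed

lemma gg_shift: "gg (a+1) t = t * gg a t"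
proof (cases "t > 0")
  case True
  have "t powr (a+1-1) = t powr (a-1) * t powr 1" by (subst powr_add[symmetric]) simp
  then show ?thesis using True by (auto simp: gg_def indicator_def)
qed (auto simp: gg_def indicator_def)

lemma moment2: assumes "a > 0"
  shows "integrable lborel (\<lambda>t. (t-a)^2 * gg a t)" "integral\<^sup>L lborel (\<lambda>t. (t-a)^2 * gg a t) = a * Gamma a"
proof -
  have e: "(t-a)^2 * gg a t = gg (a+1+1) t - 2*a * gg (a+1) t + a^2 * gg a t" for t
  proof -
    have "gg (a+1+1) t = t * (t * gg a t)" "gg (a+1) t = t * gg a t" using gg_shift[of "a+1" t] gg_shift[of a t] by simp_all
    then show ?thesis by (simp only:) (simp add: power2_eq_square algebra_simps)
  qed
  have i1: "integrable lborel (gg (a+1))" "integrable lborel (gg (a+1+1))" using gg_int assms by auto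
  have i0: "integrable lborel (gg a)" using gg_int assms by auto
  show "integrable lborel (\<lambda>t. (t-a)^2 * gg a t)" unfolding e using i0 i1 by auto
  have G1: "Gamma (a+1) = a * Gamma a" using assms by (intro Gamma_plus1) (auto elim!: nonpos_Ints_cases)
  have G2: "Gamma (a+1+1) = (a+1) * Gamma (a+1)" using assms by (intro Gamma_plus1) (auto elim!: nonpos_Ints_cases)
  have "integral\<^sup>L lborel (\<lambda>t. (t-a)^2 * gg a t) = Gamma (a+1+1) - 2*a*Gamma (a+1) + a^2 * Gamma a"
    unfolding e using i0 i1 assms gg_int[of a] gg_int[of "a+1"] gg_int[of "a+1+1"] by simp
  also have "\<dots> = a * Gamma a" unfolding G2 G1 by (simp add: power2_eq_square algebra_simps)
  finally show "integral\<^sup>L lborel (\<lambda>t. (t-a)^2 * gg a t) = a * Gamma a" .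
qed

lemma lig_eq: "lower_inc_gamma a x = integral\<^sup>L lborel (\<lambda>t. indicator {..x} t * gg a t)"
  unfolding lower_inc_gamma_def set_lebesgue_integral_def gg_def
  by (intro Bochner_Integration.integral_cong) (auto simp: indicator_def exp_minus field_simps)

lemma ind_int: assumes "a > 0" "A \<in> sets borel" shows "integrable lborel (\<lambda>t. indicator A t * gg a t)"
  using integrable_mult_indicator[of A lborel "gg a"] gg_int[OF assms(1)] assms(2) by simp

lemma lig_nonneg: "lower_inc_gamma a z \<ge> 0"
  unfolding lig_eq by (intro integral_nonneg_AE) (auto simp: gg_nonneg)

lemma lig_le: assumes "a > 0" shows "lower_inc_gamma a z \<le> Gamma a"
  unfolding lig_eq gg_int(2)[OF assms, symmetric]
  by (intro integral_mono ind_int gg_int assms) (auto simp: indicator_def gg_nonneg)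

lemma lig_mono: assumes "a > 0" "z \<le> z'" shows "lower_inc_gamma a z \<le> lower_inc_gamma a z'"
  unfolding lig_eq
  by (intro integral_mono ind_int gg_int assms) (use assms in \<open>auto simp: indicator_def gg_nonneg\<close>)

lemma cheb: assumes "a > 0" "c > 0" "A \<in> sets borel" "\<And>t. t \<in> A \<Longrightarrow> c \<le> \<bar>t - a\<bar>"
  shows "integral\<^sup>L lborel (\<lambda>t. indicator A t * gg a t) \<le> a * Gamma a / c^2"
proof -
  have "integral\<^sup>L lborel (\<lambda>t. indicator A t * gg a t) \<le> integral\<^sup>L lborel (\<lambda>t. ((t-a)^2 * gg a t) / c^2)"
  proof (intro integral_mono ind_int assms integrable_divide moment2)
    fix t
    show "indicator A t * gg a t \<le> (t - a)\<^sup>2 * gg a t / c\<^sup>2"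
    proof (cases "t \<in> A")
      case True
      have "c^2 \<le> (t-a)^2" using assms(2) assms(4)[OF True]
        by (metis abs_ge_zero power2_abs power_mono less_imp_le)
      then have "1 \<le> (t-a)^2 / c^2" using assms(2) by simp
      then have "1 * gg a t \<le> (t-a)^2 / c^2 * gg a t" by (intro mult_right_mono gg_nonneg)
      then show ?thesis using True by simp
    qed (simp add: gg_nonneg)
  qed
  also have "\<dots> = a * Gamma a / c^2" using moment2[OF assms(1)] by simp
  finally show ?thesis .
qed

lemma lower_tail: assumes "a > 0" "0 \<le> y" "y < 1"
  shows "lower_inc_gamma a (a*y) \<le> Gamma a / (a * (1-y)^2)"
proof -
  have "lower_inc_gamma a (a*y) \<le> a * Gamma a / (a*(1-y))^2"
    unfolding lig_eq using assms by (intro cheb) (auto simp: algebra_simps)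
  also have "\<dots> = Gamma a / (a * (1-y)^2)"
  proof -
    have "(a*(1-y))^2 = a * (a*(1-y)^2)" by (simp add: power_mult_distrib power2_eq_square)
    then show ?thesis using assms by (simp add: mult_divide_mult_cancel_left_if)
  qed
  finally show ?thesis .
qed

lemma upper_tail: assumes "a > 0" "1 < y"
  shows "Gamma a - lower_inc_gamma a (a*y) \<le> Gamma a / (a * (y-1)^2)"
proof -
  have "Gamma a - lower_inc_gamma a (a*y) = integral\<^sup>L lborel (\<lambda>t. indicator {a*y<..} t * gg a t)"
  proof -
    have "Gamma a - lower_inc_gamma a (a*y) = integral\<^sup>L lborel (\<lambda>t. gg a t - indicator {..a*y} t * gg a t)"
      unfolding lig_eq gg_int(2)[OF assms(1), symmetric] using ind_int[OF assms(1)] gg_int[OF assms(1)] by simp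
    also have "\<dots> = integral\<^sup>L lborel (\<lambda>t. indicator {a*y<..} t * gg a t)"
      by (intro Bochner_Integration.integral_cong) (auto simp: indicator_def)
    finally show ?thesis .
  qed
  also have "\<dots> \<le> a * Gamma a / (a*(y-1))^2"
    using assms by (intro cheb) (auto simp: algebra_simps)
  also have "\<dots> = Gamma a / (a * (y-1)^2)"
  proof -
    have "(a*(y-1))^2 = a * (a*(y-1)^2)" by (simp add: power_mult_distrib power2_eq_square)
    then show ?thesis using assms by (simp add: mult_divide_mult_cancel_left_if)
  qed
  finally show ?thesis .
qed

definition QQ :: "real \<Rightarrow> nat \<Rightarrow> real \<Rightarrow> real" where
  "QQ \<beta> N x = 1 - lower_inc_gamma (real N / 2) (real N * \<beta> * x / 2) / Gamma (real N / 2)"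

lemma QQ_bounds: "0 \<le> QQ \<beta> N x" "QQ \<beta> N x \<le> 1"
proof -
  show "QQ \<beta> N x \<le> 1" unfolding QQ_def
    by (cases "N = 0") (auto intro!: divide_nonneg_nonneg lig_nonneg Gamma_real_nonneg)
  show "0 \<le> QQ \<beta> N x" unfolding QQ_def
  proof (cases "N = 0")
    case False
    then have "real N / 2 > 0" by simp
    then show "0 \<le> 1 - lower_inc_gamma (real N / 2) (real N * \<beta> * x / 2) / Gamma (real N / 2)"
      using lig_le[of "real N / 2"] Gamma_real_pos[of "real N / 2"] by (simp add: divide_le_eq_1)
  qed simp
qed

lemma QQ_meas: assumes "\<beta> > 0" shows "QQ \<beta> N \<in> borel_measurable lborel"
proof (cases "N = 0")
  case True then show ?thesis unfolding QQ_def by simp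
next
  case False
  then have a: "real N / 2 > 0" by simp
  have "mono (\<lambda>x. lower_inc_gamma (real N / 2) (real N * \<beta> * x / 2))"
  proof (rule monoI)
    fix x y :: real assume "x \<le> y"
    then have "real N * \<beta> * x / 2 \<le> real N * \<beta> * y / 2" using assms
      by (intro divide_right_mono mult_left_mono) auto
    then show "lower_inc_gamma (real N / 2) (real N * \<beta> * x / 2) \<le> lower_inc_gamma (real N / 2) (real N * \<beta> * y / 2)"
      by (rule lig_mono[OF a])
  qed
  then have "(\<lambda>x. lower_inc_gamma (real N / 2) (real N * \<beta> * x / 2)) \<in> borel_measurable borel"
    by (rule borel_measurable_mono)
  then show ?thesis unfolding QQ_def by simp
qed

lemma QQ_lim1: assumes "\<beta> > 0" "0 \<le> x" "\<beta> * x < 1"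
  shows "(\<lambda>N. QQ \<beta> N x) \<longlonglongrightarrow> 1"
proof (rule tendsto_sandwich)
  define y where "y = \<beta> * x"
  have y: "0 \<le> y" "y < 1" using assms by (auto simp: y_def)
  show "\<forall>\<^sub>F N in sequentially. 1 - (2 / (1-y)^2) / real N \<le> QQ \<beta> N x"
    using eventually_gt_at_top[of "0::nat"]
  proof eventually_elim
    case (elim N)
    define a where "a = real N / 2"
    have a: "a > 0" using elim by (simp add: a_def)
    have e: "real N * \<beta> * x / 2 = a * y" by (simp add: a_def y_def)
    have "lower_inc_gamma a (a*y) / Gamma a \<le> (Gamma a / (a * (1-y)^2)) / Gamma a"
      using lower_tail[OF a y] Gamma_real_pos[OF a] by (intro divide_right_mono) auto
    also have "\<dots> = (2 / (1-y)^2) / real N" using Gamma_real_pos[OF a] by (simp add: a_def)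
    finally show ?case unfolding QQ_def e a_def[symmetric] by simp
  qed
  show "\<forall>\<^sub>F N in sequentially. QQ \<beta> N x \<le> 1" using QQ_bounds by simp
  show "(\<lambda>N. 1 - (2 / (1-y)^2) / real N) \<longlonglongrightarrow> 1"
    using tendsto_diff[OF tendsto_const lim_const_over_n[of "2 / (1-y)^2"], of 1] by simp
qed simp

lemma QQ_lim0: assumes "\<beta> > 0" "\<beta> * x > 1"
  shows "(\<lambda>N. QQ \<beta> N x) \<longlonglongrightarrow> 0"
proof (rule tendsto_sandwich)
  define y where "y = \<beta> * x"
  have y: "1 < y" using assms by (auto simp: y_def)
  show "\<forall>\<^sub>F N in sequentially. QQ \<beta> N x \<le> (2 / (y-1)^2) / real N"
    using eventually_gt_at_top[of "0::nat"]
  proof eventually_elim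
    case (elim N)
    define a where "a = real N / 2"
    have a: "a > 0" using elim by (simp add: a_def)
    have e: "real N * \<beta> * x / 2 = a * y" by (simp add: a_def y_def)
    have G: "Gamma a > 0" using Gamma_real_pos[OF a] .
    have "QQ \<beta> N x = (Gamma a - lower_inc_gamma a (a*y)) / Gamma a"
      unfolding QQ_def e a_def[symmetric] using G by (simp add: field_simps)
    also have "\<dots> \<le> (Gamma a / (a * (y-1)^2)) / Gamma a"
      using upper_tail[OF a y] G by (intro divide_right_mono) auto
    also have "\<dots> = (2 / (y-1)^2) / real N" using G by (simp add: a_def)
    finally show ?case .
  qed
  show "\<forall>\<^sub>F N in sequentially. 0 \<le> QQ \<beta> N x" using QQ_bounds by simp
  show "(\<lambda>N. (2 / (y-1)^2) / real N) \<longlonglongrightarrow> 0"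
    using lim_const_over_n .
qed simp

theorem mainTheorem1:
  fixes p :: "real \<Rightarrow> real" and \<beta> :: real
  assumes p_meas: "p \<in> borel_measurable lborel"
    and p_nonneg: "\<And>x. x \<ge> 0 \<Longrightarrow> p x \<ge> 0"
    and p_int: "set_integrable lborel {0..} p"
    and p_total: "(LINT x:{0..}|lborel. p x) = 1"
    and beta_pos: "\<beta> > 0"
  shows "(\<lambda>N. word_error_rate p N \<beta>) \<longlonglongrightarrow> (LINT x:{0..1/\<beta>}|lborel. p x)
         \<and> (LINT x:{0..1/\<beta>}|lborel. p x) = sqr_cdf p (1/\<beta>)"
proof
  show "(LINT x:{0..1/\<beta>}|lborel. p x) = sqr_cdf p (1/\<beta>)" by (simp add: sqr_cdf_def)
  have w: "word_error_rate p N \<beta> = integral\<^sup>L lborel (\<lambda>x. indicator {0..} x * (QQ \<beta> N x * p x))" for N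
    unfolding word_error_rate_def set_lebesgue_integral_def QQ_def by simp
  have "(\<lambda>N. integral\<^sup>L lborel (\<lambda>x. indicator {0..} x * (QQ \<beta> N x * p x)))
        \<longlonglongrightarrow> integral\<^sup>L lborel (\<lambda>x. indicator {0..1/\<beta>} x * p x)"
  proof (rule integral_dominated_convergence[where w="\<lambda>x. indicator {0..} x * p x"])
    show "(\<lambda>x. indicator {0..1/\<beta>} x * p x) \<in> borel_measurable lborel" using p_meas by measurable
    show "(\<lambda>x. indicator {0..} x * (QQ \<beta> N x * p x)) \<in> borel_measurable lborel" for N
      using p_meas QQ_meas[OF beta_pos, of N] by measurable
    show "integrable lborel (\<lambda>x. indicator {0..} x * p x)" using p_int by (simp add: set_integrable_def)
    show "AE x in lborel. norm (indicator {0..} x * (QQ \<beta> N x * p x)) \<le> indicator {0..} x * p x" for N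
    proof (rule AE_I2)
      fix x show "norm (indicator {0..} x * (QQ \<beta> N x * p x)) \<le> indicator {0..} x * p x"
      proof (cases "x \<ge> 0")
        case True
        then have "0 \<le> p x" by (rule p_nonneg)
        then have "QQ \<beta> N x * p x \<le> 1 * p x" "0 \<le> QQ \<beta> N x * p x"
          using QQ_bounds[of \<beta> N x] by (intro mult_right_mono mult_nonneg_nonneg; simp)+
        then show ?thesis using True by simp
      qed simp
    qed
    show "AE x in lborel. (\<lambda>N. indicator {0..} x * (QQ \<beta> N x * p x)) \<longlonglongrightarrow> indicator {0..1/\<beta>} x * p x"
      using AE_lborel_singleton[of "1/\<beta>"]
    proof eventually_elim
      case (elim x)
      show ?case
      proof (cases "x \<ge> 0")
        case False then show ?thesis by simp
      next
        case True
        show ?thesis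
        proof (cases "x < 1/\<beta>")
          case True
          have "\<beta> * x < 1" using True beta_pos by (simp add: field_simps)
          then have "(\<lambda>N. QQ \<beta> N x * p x) \<longlonglongrightarrow> 1 * p x"
            using QQ_lim1[OF beta_pos \<open>x \<ge> 0\<close>] by (intro tendsto_mult tendsto_const)
          then show ?thesis using True \<open>x \<ge> 0\<close> by simp
        next
          case False
          then have "x > 1/\<beta>" using elim by simp
          then have "\<beta> * x > 1" using beta_pos by (simp add: field_simps)
          then have "(\<lambda>N. QQ \<beta> N x * p x) \<longlonglongrightarrow> 0 * p x"
            using QQ_lim0[OF beta_pos] by (intro tendsto_mult tendsto_const)
          then show ?thesis using \<open>x > 1/\<beta>\<close> \<open>x \<ge> 0\<close> by (simp add: indicator_def)
        qed
      qed
    qed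
  qed
  then show "(\<lambda>N. word_error_rate p N \<beta>) \<longlonglongrightarrow> (LINT x:{0..1/\<beta>}|lborel. p x)"
    unfolding w set_lebesgue_integral_def by simp
qed

end
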